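(* Let $(X,\rho)$ be a complete locally compact $\mathbb R$-tree. For any two rooted orders $\sigma,\tau\in\mathcal O_+^r(X)$, the Hausdorff distance $\operatorname{Hd}(\sigma,\tau)$ (with respect to the sum metric $d_+$ on $X\times X$) is finite and equals $\rho(x,y)$, where $x$ is the root of $\tau$ and $y$ is the root of $\sigma$.
   Context: An $\mathbb R$-tree is a geodesic metric space in which any two points are joined by a unique segment and $[xy]\subset[xz]\cup[zy]$ for all $x,y,z$. $\mathcal O_+(X)$ is the set of partial orders $\tau$ on $X$ such that any two points have a supremum $x\vee y$, $x\,\tau\, z\,\tau\, y$ implies $\rho(x,z)+\rho(z,y)=\rho(x,y)$, $\rho(x,y)=\rho(x,x\vee y)+\rho(x\vee y,y)$ for all $x,y$, and every upper cone $\{y: x\,\tau\, y\}$ is linearly ordered. $\mathcal O_+^r(X)$ consists of those having a greatest element (root). Orders are regarded as subsets of $X\times X$ with metric $d_+((x_1,x_2),(y_1,y_2))=\rho(x_1,y_1)+\rho(x_2,y_2)$, and $\operatorname{Hd}(V,W)=\inf\{\varepsilon>0: V\subset\mathcal N_\varepsilon(W), W\subset\mathcal N_\varepsilon(V)\}$, $\mathcal N_\varepsilon$ denoting open $\varepsilon$-neighbourhoods in $d_+$. *)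

theory Defs
  imports "HOL-Analysis.Analysis" "HOL-Library.Extended_Real"
begin

definition is_segment :: "'a set \<Rightarrow> ('a \<Rightarrow> 'a \<Rightarrow> real) \<Rightarrow> 'a \<Rightarrow> 'a \<Rightarrow> 'a set \<Rightarrow> bool" where
  "is_segment X \<rho> x y S \<longleftrightarrow>
     (\<exists>\<gamma>. \<gamma> ` {0..\<rho> x y} = S \<and> S \<subseteq> X \<and> \<gamma> 0 = x \<and> \<gamma> (\<rho> x y) = y \<and>
          (\<forall>s\<in>{0..\<rho> x y}. \<forall>t\<in>{0..\<rho> x y}. \<rho> (\<gamma> s) (\<gamma> t) = \<bar>s - t\<bar>))"

definition segment :: "'a set \<Rightarrow> ('a \<Rightarrow> 'a \<Rightarrow> real) \<Rightarrow> 'a \<Rightarrow> 'a \<Rightarrow> 'a set" where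
  "segment X \<rho> x y = (THE S. is_segment X \<rho> x y S)"

definition R_tree :: "'a set \<Rightarrow> ('a \<Rightarrow> 'a \<Rightarrow> real) \<Rightarrow> bool" where
  "R_tree X \<rho> \<longleftrightarrow> Metric_space X \<rho> \<and>
     (\<forall>x\<in>X. \<forall>y\<in>X. \<exists>!S. is_segment X \<rho> x y S) \<and>
     (\<forall>x\<in>X. \<forall>y\<in>X. \<forall>z\<in>X. segment X \<rho> x y \<subseteq> segment X \<rho> x z \<union> segment X \<rho> z y)"

definition is_sup :: "'a set \<Rightarrow> ('a \<times> 'a) set \<Rightarrow> 'a \<Rightarrow> 'a \<Rightarrow> 'a \<Rightarrow> bool" where
  "is_sup X \<tau> x y s \<longleftrightarrow> s \<in> X \<and> (x, s) \<in> \<tau> \<and> (y, s) \<in> \<tau> \<and>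
     (\<forall>u\<in>X. (x, u) \<in> \<tau> \<and> (y, u) \<in> \<tau> \<longrightarrow> (s, u) \<in> \<tau>)"

definition sup_ord :: "'a set \<Rightarrow> ('a \<times> 'a) set \<Rightarrow> 'a \<Rightarrow> 'a \<Rightarrow> 'a" where
  "sup_ord X \<tau> x y = (THE s. is_sup X \<tau> x y s)"

definition O_plus :: "'a set \<Rightarrow> ('a \<Rightarrow> 'a \<Rightarrow> real) \<Rightarrow> ('a \<times> 'a) set set" where
  "O_plus X \<rho> = {\<tau>. \<tau> \<subseteq> X \<times> X \<and> refl_on X \<tau> \<and> antisym \<tau> \<and> trans \<tau> \<and>
     (\<forall>x\<in>X. \<forall>y\<in>X. \<exists>s. is_sup X \<tau> x y s) \<and>
     (\<forall>x\<in>X. \<forall>y\<in>X. \<forall>z\<in>X. (x, z) \<in> \<tau> \<and> (z, y) \<in> \<tau> \<longrightarrow> \<rho> x z + \<rho> z y = \<rho> x y) \<and>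
     (\<forall>x\<in>X. \<forall>y\<in>X. \<rho> x y = \<rho> x (sup_ord X \<tau> x y) + \<rho> (sup_ord X \<tau> x y) y) \<and>
     (\<forall>x\<in>X. total_on {y\<in>X. (x, y) \<in> \<tau>} \<tau>)}"

definition is_root :: "'a set \<Rightarrow> ('a \<times> 'a) set \<Rightarrow> 'a \<Rightarrow> bool" where
  "is_root X \<tau> r \<longleftrightarrow> r \<in> X \<and> (\<forall>x\<in>X. (x, r) \<in> \<tau>)"

definition root :: "'a set \<Rightarrow> ('a \<times> 'a) set \<Rightarrow> 'a" where
  "root X \<tau> = (THE r. is_root X \<tau> r)"

definition O_plus_r :: "'a set \<Rightarrow> ('a \<Rightarrow> 'a \<Rightarrow> real) \<Rightarrow> ('a \<times> 'a) set set" where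
  "O_plus_r X \<rho> = {\<tau> \<in> O_plus X \<rho>. \<exists>r. is_root X \<tau> r}"

definition d_plus :: "('a \<Rightarrow> 'a \<Rightarrow> real) \<Rightarrow> 'a \<times> 'a \<Rightarrow> 'a \<times> 'a \<Rightarrow> real" where
  "d_plus \<rho> p q = \<rho> (fst p) (fst q) + \<rho> (snd p) (snd q)"

definition nbhd :: "'a set \<Rightarrow> ('a \<Rightarrow> 'a \<Rightarrow> real) \<Rightarrow> real \<Rightarrow> ('a \<times> 'a) set \<Rightarrow> ('a \<times> 'a) set" where
  "nbhd X \<rho> \<epsilon> W = {p \<in> X \<times> X. \<exists>q\<in>W. d_plus \<rho> p q < \<epsilon>}"

text \<open>Hausdorff distance, valued in the extended reals (infimum of the empty set is \<infinity>).\<close>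
definition Hd :: "'a set \<Rightarrow> ('a \<Rightarrow> 'a \<Rightarrow> real) \<Rightarrow> ('a \<times> 'a) set \<Rightarrow> ('a \<times> 'a) set \<Rightarrow> ereal" where
  "Hd X \<rho> V W = Inf (ereal ` {\<epsilon>. \<epsilon> > 0 \<and> V \<subseteq> nbhd X \<rho> \<epsilon> W \<and> W \<subseteq> nbhd X \<rho> \<epsilon> V})"

end

theory Submission
  imports Defs
begin

lemma root_ok:
  assumes t: "\<tau> \<in> O_plus_r X \<rho>"
  shows "is_root X \<tau> (root X \<tau>)"
proof -
  from t obtain r where r: "is_root X \<tau> r" and o: "\<tau> \<in> O_plus X \<rho>" unfolding O_plus_r_def by auto
  have as: "antisym \<tau>" using o unfolding O_plus_def by auto
  have "\<And>r'. is_root X \<tau> r' \<Longrightarrow> r' = r"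
    using r as unfolding is_root_def antisym_def by blast
  then have "root X \<tau> = r" unfolding root_def using r by (rule the_equality[rotated])
  then show ?thesis using r by simp
qed

lemma sup_ok:
  assumes o: "\<tau> \<in> O_plus X \<rho>" and s: "is_sup X \<tau> a b m"
  shows "sup_ord X \<tau> a b = m"
proof -
  have as: "antisym \<tau>" using o unfolding O_plus_def by auto
  have "\<And>m'. is_sup X \<tau> a b m' \<Longrightarrow> m' = m"
    using s as unfolding is_sup_def antisym_def by blast
  then show ?thesis unfolding sup_ord_def using s by (rule the_equality[rotated])
qed

lemma key_upper:
  assumes M: "Metric_space X \<rho>" and s: "\<sigma> \<in> O_plus X \<rho>" and t: "\<tau> \<in> O_plus X \<rho>"
    and ry: "is_root X \<sigma> y" and rx: "is_root X \<tau> x" and ab: "(a,b) \<in> \<sigma>"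
  shows "\<exists>q\<in>\<tau>. d_plus \<rho> (a,b) q \<le> \<rho> x y"
proof -
  have sX: "\<sigma> \<subseteq> X \<times> X" using s unfolding O_plus_def by auto
  have a: "a \<in> X" and b: "b \<in> X" using ab sX by auto
  have x: "x \<in> X" and y: "y \<in> X" using rx ry unfolding is_root_def by auto
  obtain m where m: "is_sup X \<tau> a b m" using t a b unfolding O_plus_def by blast
  have mX: "m \<in> X" and am: "(a,m) \<in> \<tau>" and bm: "(b,m) \<in> \<tau>" using m unfolding is_sup_def by auto
  have mx: "(m,x) \<in> \<tau>" using rx mX unfolding is_root_def by auto
  have by': "(b,y) \<in> \<sigma>" using ry b unfolding is_root_def by auto
  have h1: "\<rho> a b = \<rho> a m + \<rho> m b"
    using t a b sup_ok[OF t m] unfolding O_plus_def by auto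
  have chain_t: "\<And>u v w. u \<in> X \<Longrightarrow> v \<in> X \<Longrightarrow> w \<in> X \<Longrightarrow> (u,w) \<in> \<tau> \<Longrightarrow> (w,v) \<in> \<tau> \<Longrightarrow> \<rho> u w + \<rho> w v = \<rho> u v"
    using t unfolding O_plus_def by blast
  have chain_s: "\<And>u v w. u \<in> X \<Longrightarrow> v \<in> X \<Longrightarrow> w \<in> X \<Longrightarrow> (u,w) \<in> \<sigma> \<Longrightarrow> (w,v) \<in> \<sigma> \<Longrightarrow> \<rho> u w + \<rho> w v = \<rho> u v"
    using s unfolding O_plus_def by blast
  have h2: "\<rho> a m + \<rho> m x = \<rho> a x" using chain_t[OF a x mX am mx] .
  have h3: "\<rho> b m + \<rho> m x = \<rho> b x" using chain_t[OF b x mX bm mx] .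
  have h4: "\<rho> a b + \<rho> b y = \<rho> a y" using chain_s[OF a y b ab by'] .
  have t1: "\<rho> b x \<le> \<rho> b y + \<rho> y x" using M b x y by (simp add: Metric_space.triangle)
  have t2: "\<rho> a y \<le> \<rho> a x + \<rho> x y" using M a x y by (simp add: Metric_space.triangle)
  have c1: "\<rho> m b = \<rho> b m" using M mX b by (simp add: Metric_space.commute)
  have c2: "\<rho> y x = \<rho> x y" using M x y by (simp add: Metric_space.commute)
  have aa: "\<rho> a a = 0" using M a by (simp add: Metric_space.zero)
  have "d_plus \<rho> (a,b) (a,m) \<le> \<rho> x y"
    unfolding d_plus_def using h1 h2 h3 h4 t1 t2 c1 c2 aa by simp
  then show ?thesis using am by blast
qed

lemma key_lower:
  assumes M: "Metric_space X \<rho>" and t: "\<tau> \<in> O_plus X \<rho>"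
    and rx: "is_root X \<tau> x" and y: "y \<in> X" and q: "q \<in> \<tau>"
  shows "\<rho> x y \<le> d_plus \<rho> (x,y) q"
proof -
  obtain a b where qe: "q = (a,b)" by (cases q)
  have tX: "\<tau> \<subseteq> X \<times> X" using t unfolding O_plus_def by auto
  have a: "a \<in> X" and b: "b \<in> X" using q qe tX by auto
  have x: "x \<in> X" using rx unfolding is_root_def by auto
  have bx: "(b,x) \<in> \<tau>" using rx b unfolding is_root_def by auto
  have h: "\<rho> a b + \<rho> b x = \<rho> a x" using t a b x q qe bx unfolding O_plus_def by blast
  have n: "0 \<le> \<rho> a b" using M a b by (simp add: Metric_space.nonneg)
  have t1: "\<rho> x y \<le> \<rho> x b + \<rho> b y" using M x y b by (simp add: Metric_space.triangle)
  have c1: "\<rho> x b = \<rho> b x" "\<rho> x a = \<rho> a x" "\<rho> b y = \<rho> y b"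
    using M a b x y by (simp_all add: Metric_space.commute)
  show ?thesis unfolding qe d_plus_def using h n t1 c1 by simp
qed

lemma Inf_ereal_gt: "Inf (ereal ` {D<..}) = ereal (D::real)"
proof (rule Inf_eqI)
  fix z assume "z \<in> ereal ` {D<..}" then show "ereal D \<le> z" by auto
next
  fix z assume h: "\<And>w. w \<in> ereal ` {D<..} \<Longrightarrow> z \<le> w"
  show "z \<le> ereal D"
  proof (rule ereal_le_epsilon2)
    fix e :: real assume "0 < e"
    then have "z \<le> ereal (D + e)" using h by auto
    then show "z \<le> ereal D + ereal e" by simp
  qed
qed

theorem lemma1:
  fixes X :: "'a set" and \<rho> :: "'a \<Rightarrow> 'a \<Rightarrow> real" and \<sigma> \<tau> :: "('a \<times> 'a) set"
  assumes "R_tree X \<rho>"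
    and "Metric_space.mcomplete X \<rho>"
    and "locally_compact_space (Metric_space.mtopology X \<rho>)"
    and "\<sigma> \<in> O_plus_r X \<rho>" and "\<tau> \<in> O_plus_r X \<rho>"
  shows "Hd X \<rho> \<sigma> \<tau> < \<infinity> \<and> Hd X \<rho> \<sigma> \<tau> = ereal (\<rho> (root X \<tau>) (root X \<sigma>))"
proof -
  have M: "Metric_space X \<rho>" using assms(1) unfolding R_tree_def by auto
  define x where "x = root X \<tau>"
  define y where "y = root X \<sigma>"
  have rx: "is_root X \<tau> x" unfolding x_def by (rule root_ok[OF assms(5)])
  have ry: "is_root X \<sigma> y" unfolding y_def by (rule root_ok[OF assms(4)])
  have s: "\<sigma> \<in> O_plus X \<rho>" and t: "\<tau> \<in> O_plus X \<rho>" using assms(4,5) unfolding O_plus_r_def by auto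
  have xX: "x \<in> X" and yX: "y \<in> X" using rx ry unfolding is_root_def by auto
  have sX: "\<sigma> \<subseteq> X \<times> X" and tX: "\<tau> \<subseteq> X \<times> X" using s t unfolding O_plus_def by auto
  have D0: "0 \<le> \<rho> x y" using M xX yX by (simp add: Metric_space.nonneg)
  have cxy: "\<rho> y x = \<rho> x y" using M xX yX by (simp add: Metric_space.commute)
  have E: "{\<epsilon>. \<epsilon> > 0 \<and> \<sigma> \<subseteq> nbhd X \<rho> \<epsilon> \<tau> \<and> \<tau> \<subseteq> nbhd X \<rho> \<epsilon> \<sigma>} = {\<rho> x y<..}"
  proof (intro set_eqI iffI)
    fix \<epsilon> assume "\<epsilon> \<in> {\<epsilon>. \<epsilon> > 0 \<and> \<sigma> \<subseteq> nbhd X \<rho> \<epsilon> \<tau> \<and> \<tau> \<subseteq> nbhd X \<rho> \<epsilon> \<sigma>}"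
    then have "\<sigma> \<subseteq> nbhd X \<rho> \<epsilon> \<tau>" by auto
    moreover have "(x,y) \<in> \<sigma>" using ry xX unfolding is_root_def by auto
    ultimately obtain q where "q \<in> \<tau>" "d_plus \<rho> (x,y) q < \<epsilon>" unfolding nbhd_def by blast
    then show "\<epsilon> \<in> {\<rho> x y<..}" using key_lower[OF M t rx yX] by (meson greaterThan_iff order_le_less_trans)
  next
    fix \<epsilon> assume e: "\<epsilon> \<in> {\<rho> x y<..}"
    have "\<sigma> \<subseteq> nbhd X \<rho> \<epsilon> \<tau>"
    proof
      fix p assume p: "p \<in> \<sigma>"
      obtain a b where pe: "p = (a,b)" by (cases p)
      obtain q where "q \<in> \<tau>" "d_plus \<rho> (a,b) q \<le> \<rho> x y"
        using key_upper[OF M s t ry rx] p pe by blast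
      then show "p \<in> nbhd X \<rho> \<epsilon> \<tau>" unfolding nbhd_def using p pe sX e by force
    qed
    moreover have "\<tau> \<subseteq> nbhd X \<rho> \<epsilon> \<sigma>"
    proof
      fix p assume p: "p \<in> \<tau>"
      obtain a b where pe: "p = (a,b)" by (cases p)
      obtain q where "q \<in> \<sigma>" "d_plus \<rho> (a,b) q \<le> \<rho> y x"
        using key_upper[OF M t s rx ry] p pe by blast
      then show "p \<in> nbhd X \<rho> \<epsilon> \<sigma>" unfolding nbhd_def using p pe tX e cxy by force
    qed
    ultimately show "\<epsilon> \<in> {\<epsilon>. \<epsilon> > 0 \<and> \<sigma> \<subseteq> nbhd X \<rho> \<epsilon> \<tau> \<and> \<tau> \<subseteq> nbhd X \<rho> \<epsilon> \<sigma>}"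
      using e D0 by auto
  qed
  have "Hd X \<rho> \<sigma> \<tau> = ereal (\<rho> x y)" unfolding Hd_def E by (rule Inf_ereal_gt)
  then show ?thesis unfolding x_def y_def by simp
qed

end
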